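(* Let ${\cal D}$ be a set of directions with $0\le\alpha({\cal D})\le\pi/2$, and let $r=1-O(\sqrt{\log n/n})$ (i.e. $r = 1 - c\sqrt{\log n / n}$ for a fixed constant $c>0$). Then the set of points of the unit disk $B_1$ that are unsafe relative to $B_r$ can be covered by a union of $O(1)$ caps of $B_1$, where the base of each such cap has length $O((\log n/n)^{1/4})$ and its height is $O(\sqrt{\log n/n})$.
   Context: $B_r$ denotes the disk of radius $r$ centered at the origin $o$. A cap of $B_1$ is a region of $B_1$ cut off by a chord (its base); its height is the maximal distance from the chord to the arc. A set of directions is a set ${\cal D}$ of unit vectors in $\mathbb{R}^2$ such that $v\in{\cal D}$ implies $-v\in{\cal D}$. A pair $v_1,v_2\in{\cal D}$ is a ${\cal D}$-pair if $v_2$ is counterclockwise from $v_1$ and no vector of ${\cal D}$ lies strictly between them; $\alpha({\cal D})$ is the maximum over ${\cal D}$-pairs of the counterclockwise angle from $v_1$ to $v_2$. With $\mathrm{pspan}(u_1,u_2)$ the open wedge of positive combinations, ${\cal Q}({\cal D})$ consists of the open half-planes bounded by lines through the origin with direction in ${\cal D}$ together with the wedges $\mathrm{pspan}(-v_1,v_2)$ and $\mathrm{pspan}(v_1,-v_2)$ for every ${\cal D}$-pair $(v_1,v_2)$; ${\cal T}({\cal D})$ is the set of all their translates, and $\mathcal{CH}_{{\cal D}}(S)=\mathbb{R}^2\setminus\bigcup\{I\in{\cal T}({\cal D}) : I\cap S=\emptyset\}$. A point $p\in B_1$ is safe relative to $B_r$ if the segment $op$ is contained in $\mathcal{CH}_{{\cal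 D}}(B_r\cup\{p\})$; otherwise it is unsafe. The implied constants in $O(\cdot)$ may depend on the constant in the definition of $r$ but not on $n$ or ${\cal D}$. *)

theory Defs
  imports "HOL-Analysis.Analysis"
begin

text \<open>The plane R^2 is modelled by the type complex. Points are complex numbers.\<close>

definition direction_set :: "complex set \<Rightarrow> bool" where
  "direction_set D \<longleftrightarrow> (\<forall>v\<in>D. norm v = 1 \<and> - v \<in> D)"

definition ccw_angle :: "complex \<Rightarrow> complex \<Rightarrow> real" where
  "ccw_angle u v = (let a = Arg (v / u) in if a < 0 then a + 2 * pi else a)"

definition D_pair :: "complex set \<Rightarrow> complex \<Rightarrow> complex \<Rightarrow> bool" where
  "D_pair D v1 v2 \<longleftrightarrow> v1 \<in> D \<and> v2 \<in> D \<and> v1 \<noteq> v2 \<and>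
     \<not> (\<exists>w\<in>D. 0 < ccw_angle v1 w \<and> ccw_angle v1 w < ccw_angle v1 v2)"

definition alpha_dirs :: "complex set \<Rightarrow> real" where
  "alpha_dirs D = (if \<exists>v1 v2. D_pair D v1 v2
     then Sup {ccw_angle v1 v2 | v1 v2. D_pair D v1 v2} else 0)"

definition pspan :: "complex \<Rightarrow> complex \<Rightarrow> complex set" where
  "pspan u1 u2 = {a *\<^sub>R u1 + b *\<^sub>R u2 | a b. a > 0 \<and> b > 0}"

text \<open>Open half-planes bounded by the line through the origin with direction v
  (Im (cnj v * x) is the cross product v x x).\<close>
definition open_halfplanes :: "complex \<Rightarrow> complex set set" where
  "open_halfplanes v = {{x. 0 < Im (cnj v * x)}, {x. Im (cnj v * x) < 0}}"

definition Q_dirs :: "complex set \<Rightarrow> complex set set" where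
  "Q_dirs D = (\<Union>v\<in>D. open_halfplanes v) \<union>
     {W. \<exists>v1 v2. D_pair D v1 v2 \<and> (W = pspan (- v1) v2 \<or> W = pspan v1 (- v2))}"

definition T_dirs :: "complex set \<Rightarrow> complex set set" where
  "T_dirs D = {(\<lambda>x. p + x) ` Q | p Q. Q \<in> Q_dirs D}"

definition CH_dirs :: "complex set \<Rightarrow> complex set \<Rightarrow> complex set" where
  "CH_dirs D S = UNIV - \<Union>{I \<in> T_dirs D. I \<inter> S = {}}"

definition safe_pt :: "complex set \<Rightarrow> real \<Rightarrow> complex \<Rightarrow> bool" where
  "safe_pt D r p \<longleftrightarrow> closed_segment 0 p \<subseteq> CH_dirs D (cball 0 r \<union> {p})"

definition unsafe_set :: "complex set \<Rightarrow> real \<Rightarrow> complex set" where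
  "unsafe_set D r = {p \<in> cball 0 1. \<not> safe_pt D r p}"

text \<open>The cap of the unit disk cut off by the chord {x. x \<bullet> u = t} on the side of u
  (u a unit vector, -1 < t < 1). Its base (chord) has length 2 sqrt(1 - t^2) and
  its height is 1 - t. Every cap of B_1 is of this form.\<close>
definition cap :: "complex \<Rightarrow> real \<Rightarrow> complex set" where
  "cap u t = {x. norm x \<le> 1 \<and> x \<bullet> u \<ge> t}"

definition cap_base :: "real \<Rightarrow> real" where
  "cap_base t = 2 * sqrt (1 - t\<^sup>2)"

definition cap_height :: "real \<Rightarrow> real" where
  "cap_height t = 1 - t"

end

theory Submission
  imports Defs
begin


lemma nf:
  fixes u1 u2 :: complex
  assumes "norm u1 = 1" "norm u2 = 1"
  shows "(norm (a *\<^sub>R u1 + b *\<^sub>R u2))\<^sup>2 = a\<^sup>2 + b\<^sup>2 + 2*a*b*(u1 \<bullet> u2)"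
proof -
  have 1: "u1 \<bullet> u1 = 1" "u2 \<bullet> u2 = 1" using assms by (simp_all add: power2_norm_eq_inner[symmetric])
  have "(norm (a *\<^sub>R u1 + b *\<^sub>R u2))\<^sup>2 = (a *\<^sub>R u1 + b *\<^sub>R u2) \<bullet> (a *\<^sub>R u1 + b *\<^sub>R u2)"
    by (simp add: power2_norm_eq_inner)
  also have "\<dots> = a*a*(u1 \<bullet> u1) + b*b*(u2\<bullet>u2) + 2*a*b*(u1 \<bullet> u2)"
    by (simp add: inner_add_left inner_add_right inner_commute algebra_simps)
  finally show ?thesis using 1 by (simp add: power2_eq_square)
qed

lemma decomp:
  fixes u1 u2 x :: complex
  assumes "Im (cnj u1 * u2) \<noteq> 0"
  shows "x = (Im (cnj x * u2) / Im (cnj u1 * u2)) *\<^sub>R u1 + (Im (cnj u1 * x) / Im (cnj u1 * u2)) *\<^sub>R u2"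
proof -
  let ?s = "Im (cnj u1 * u2)"
  have "?s *\<^sub>R x = (Im (cnj x * u2)) *\<^sub>R u1 + (Im (cnj u1 * x)) *\<^sub>R u2"
    by (auto intro!: complex_eqI simp: algebra_simps)
  then have "x = (1/?s) *\<^sub>R ((Im (cnj x * u2)) *\<^sub>R u1 + (Im (cnj u1 * x)) *\<^sub>R u2)"
    using assms by (metis divideR_right scaleR_scaleR field_class.field_divide_inverse mult_1)
  then show ?thesis by (simp add: scaleR_add_right)
qed

lemma inner_cnj: "(u1::complex) \<bullet> u2 = Re (cnj u1 * u2)"
  by (simp add: inner_complex_def)

lemma ks: fixes u1 u2 :: complex assumes "norm u1 = 1" "norm u2 = 1"
  shows "(u1 \<bullet> u2)\<^sup>2 + (Im (cnj u1 * u2))\<^sup>2 = 1"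
proof -
  have "norm (cnj u1 * u2) = 1" using assms by (simp add: norm_mult)
  then have "(Re (cnj u1 * u2))\<^sup>2 + (Im (cnj u1 * u2))\<^sup>2 = 1"
    by (metis cmod_power2 power_one)
  then show ?thesis by (simp add: inner_cnj)
qed

lemma cone_lemma:
  fixes u1 u2 x a p :: complex and r :: real
  assumes n1: "norm u1 = 1" and n2: "norm u2 = 1" and k0: "u1 \<bullet> u2 \<ge> 0"
    and s0: "Im (cnj u1 * u2) > 0"
    and xW: "x \<in> (\<lambda>y. a + y) ` pspan (-u1) u2"
    and disj: "(\<lambda>y. a + y) ` pspan (-u1) u2 \<inter> (cball 0 r \<union> {p}) = {}"
    and seg: "x \<in> closed_segment 0 p" and p1: "norm p \<le> 1" and r0: "0 < r"
  shows "r < Im (cnj u1 * u2) \<and> (r < p \<bullet> (-u1) \<or> r < p \<bullet> u2)"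
proof -
  define k where "k = u1 \<bullet> u2"
  define s where "s = Im (cnj u1 * u2)"
  have kk: "k\<^sup>2 + s\<^sup>2 = 1" using ks[OF n1 n2] by (simp add: k_def s_def)
  have k0': "k \<ge> 0" using k0 k_def by simp
  have s0': "s > 0" using s0 s_def by simp
  obtain \<alpha>0 \<beta>0 where ab0: "\<alpha>0 > 0" "\<beta>0 > 0" and xe: "x = a + (\<alpha>0 *\<^sub>R (-u1) + \<beta>0 *\<^sub>R u2)"
    using xW unfolding pspan_def by auto
  have inW: "a + (\<alpha> *\<^sub>R (-u1) + \<beta> *\<^sub>R u2) \<in> (\<lambda>y. a + y) ` pspan (-u1) u2"
    if "\<alpha> > 0" "\<beta> > 0" for \<alpha> \<beta>
    using that unfolding pspan_def by blast
  have H: "r < norm (x + (\<alpha> *\<^sub>R (-u1) + \<beta> *\<^sub>R u2))" if "\<alpha> \<ge> 0" "\<beta> \<ge> 0" for \<alpha> \<beta>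
  proof -
    have "x + (\<alpha> *\<^sub>R (-u1) + \<beta> *\<^sub>R u2) = a + ((\<alpha>0+\<alpha>) *\<^sub>R (-u1) + (\<beta>0+\<beta>) *\<^sub>R u2)"
      by (simp add: xe algebra_simps)
    moreover have "a + ((\<alpha>0+\<alpha>) *\<^sub>R (-u1) + (\<beta>0+\<beta>) *\<^sub>R u2) \<in> (\<lambda>y. a + y) ` pspan (-u1) u2"
      using inW ab0 that by simp
    ultimately show ?thesis using disj by (auto simp: mem_cball_0 not_le)
  qed
  define P where "P = Im (cnj x * u2) / s"
  define Q where "Q = Im (cnj u1 * x) / s"
  have xd: "x = P *\<^sub>R u1 + Q *\<^sub>R u2"
    using decomp[of u1 u2 x] s0 unfolding P_def Q_def s_def by simp
  obtain l where l: "0 \<le> l" "l \<le> 1" "x = l *\<^sub>R p"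
    using seg unfolding closed_segment_def by auto
  have "r < norm x" using H[of 0 0] by simp
  then have "x \<noteq> 0" using r0 by auto
  then have l0: "l > 0" using l by (cases "l = 0") auto
  have pe: "p = (1/l) *\<^sub>R x" using l l0 by simp
  have nx: "norm x \<le> 1" using l p1 by (simp add: mult_le_one)
  have nx2: "(norm x)\<^sup>2 = P\<^sup>2 + Q\<^sup>2 + 2*P*Q*k"
    using nf[OF n1 n2, of P Q] xd k_def by simp
  have pinner: "r < p \<bullet> w" if "r < x \<bullet> w" for w
  proof -
    have "p \<bullet> w = (x \<bullet> w) / l" using pe by (simp add: inner_scaleR_left)
    moreover have "x \<bullet> w \<le> (x \<bullet> w) / l"
    proof -
      have xp: "x \<bullet> w = l * (p \<bullet> w)" using l by (simp add: inner_scaleR_left)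
      then have "0 < p \<bullet> w" using that r0 l0 by (metis zero_less_mult_pos less_trans)
      then show ?thesis using xp l l0 by (simp add: mult_le_cancel_right1)
    qed
    ultimately show ?thesis using that by linarith
  qed
  have u11: "u1 \<bullet> u1 = 1" "u2 \<bullet> u2 = 1" using n1 n2 by (simp_all add: power2_norm_eq_inner[symmetric])
  have s2: "s^2 = 1 - k^2" using kk by simp
  have "\<not> (P \<le> 0 \<and> Q \<ge> 0)"
  proof
    assume pq: "P \<le> 0 \<and> Q \<ge> 0"
    define \<mu> where "\<mu> = 1/l - 1"
    have mu0: "\<mu> \<ge> 0" using l l0 by (simp add: \<mu>_def)
    have "p = x + \<mu> *\<^sub>R x" using pe by (simp add: \<mu>_def algebra_simps)
    also have "\<dots> = a + ((\<alpha>0 - \<mu>*P) *\<^sub>R (-u1) + (\<beta>0 + \<mu>*Q) *\<^sub>R u2)"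
      by (subst (2) xd) (simp add: xe algebra_simps)
    moreover have "\<mu>*P \<le> 0" "\<mu>*Q \<ge> 0" using pq mu0 by (simp_all add: mult_nonneg_nonpos)
    ultimately have "p \<in> (\<lambda>y. a + y) ` pspan (-u1) u2"
      using inW[of "\<alpha>0 - \<mu>*P" "\<beta>0 + \<mu>*Q"] ab0 by simp
    then show False using disj by auto
  qed
  then consider "P > 0" | "Q < 0" by linarith
  then show ?thesis
  proof cases
    case 1
    have Qr: "r < Q"
    proof (rule ccontr)
      assume "\<not> r < Q"
      define \<beta> where "\<beta> = max 0 (-Q)"
      have "x + (P *\<^sub>R (-u1) + \<beta> *\<^sub>R u2) = (Q + \<beta>) *\<^sub>R u2"
        by (simp add: xd algebra_simps)
      then have "r < \<bar>Q + \<beta>\<bar>" using H[of P \<beta>] 1 n2 by (simp add: \<beta>_def)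
      then show False using \<open>\<not> r < Q\<close> r0 by (auto simp: \<beta>_def split: if_splits)
    qed
    have Qk: "0 \<le> Q*k" using Qr r0 k0' by simp
    have "x + ((P + Q*k) *\<^sub>R (-u1) + 0 *\<^sub>R u2) = (-(Q*k)) *\<^sub>R u1 + Q *\<^sub>R u2"
      by (simp add: xd algebra_simps)
    then have lt: "r < norm ((-(Q*k)) *\<^sub>R u1 + Q *\<^sub>R u2)"
      using H[of "P + Q*k" 0] 1 Qk by simp
    have "norm ((-(Q*k)) *\<^sub>R u1 + Q *\<^sub>R u2) ^ 2 = (Q * s) ^ 2"
      using nf[OF n1 n2, of "-(Q*k)" Q] s2 unfolding k_def[symmetric] by algebra
    then have "norm ((-(Q*k)) *\<^sub>R u1 + Q *\<^sub>R u2) = Q * s"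
      by (rule power2_eq_imp_eq) (use Qr r0 s0' in auto)
    with lt have rqs: "r < Q * s" by simp
    have "Q \<le> 1"
    proof -
      have "0 \<le> P*Q*k" using 1 Qr r0 k0' by simp
      then have "Q^2 \<le> (norm x)^2" using nx2 by (simp add: add_nonneg_nonneg)
      also have "\<dots> \<le> 1^2" using nx by (simp add: power_le_one)
      finally show ?thesis by (rule power2_le_imp_le) simp
    qed
    then have "Q * s \<le> 1 * s" using s0' by (intro mult_right_mono) auto
    with rqs have rs: "r < s" by simp
    have "x \<bullet> u2 = P*k + Q" using xd u11 k_def by (simp add: inner_add_left)
    moreover have "0 \<le> P*k" using 1 k0' by simp
    ultimately have "r < x \<bullet> u2" using Qr by linarith
    then show ?thesis using rs pinner s_def by auto
  next
    case 2
    have Pr: "P < -r"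
    proof (rule ccontr)
      assume "\<not> P < -r"
      define \<alpha> where "\<alpha> = max 0 P"
      have "x + (\<alpha> *\<^sub>R (-u1) + (-Q) *\<^sub>R u2) = (P - \<alpha>) *\<^sub>R u1"
        by (simp add: xd algebra_simps)
      then have "r < \<bar>P - \<alpha>\<bar>" using H[of \<alpha> "-Q"] 2 n1 by (simp add: \<alpha>_def)
      then show False using \<open>\<not> P < -r\<close> r0 by (auto simp: \<alpha>_def split: if_splits)
    qed
    have Pk: "P*k \<le> 0" using Pr r0 k0' by (simp add: mult_nonpos_nonneg)
    have "x + (0 *\<^sub>R (-u1) + (-Q - P*k) *\<^sub>R u2) = P *\<^sub>R u1 + (-(P*k)) *\<^sub>R u2"
      by (simp add: xd algebra_simps)
    then have lt: "r < norm (P *\<^sub>R u1 + (-(P*k)) *\<^sub>R u2)"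
      using H[of 0 "-Q - P*k"] 2 Pk by simp
    have "norm (P *\<^sub>R u1 + (-(P*k)) *\<^sub>R u2) ^ 2 = (-P * s) ^ 2"
      using nf[OF n1 n2, of P "-(P*k)"] s2 unfolding k_def[symmetric] by algebra
    then have "norm (P *\<^sub>R u1 + (-(P*k)) *\<^sub>R u2) = -P * s"
      by (rule power2_eq_imp_eq) (use Pr r0 s0' in \<open>auto simp: mult_nonpos_nonneg\<close>)
    with lt have rqs: "r < -P * s" by simp
    have "-P \<le> 1"
    proof -
      have "0 \<le> P*Q" using 2 Pr r0 by (simp add: mult_nonpos_nonpos)
      then have "0 \<le> P*Q*k" using k0' by simp
      then have "(-P)^2 \<le> (norm x)^2" using nx2 by (simp add: add_nonneg_nonneg)
      also have "\<dots> \<le> 1^2" using nx by (simp add: power_le_one)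
      finally show ?thesis by (rule power2_le_imp_le) simp
    qed
    then have "-P * s \<le> 1 * s" using s0' by (intro mult_right_mono) auto
    with rqs have rs: "r < s" by simp
    have "x \<bullet> (-u1) = -(P + Q*k)" using xd u11 k_def by (simp add: inner_add_left inner_add_right inner_commute)
    moreover have "Q*k \<le> 0" using 2 k0' by (simp add: mult_nonpos_nonneg)
    ultimately have "r < x \<bullet> (-u1)" using Pr by linarith
    then have "r < p \<bullet> (-u1)" by (rule pinner)
    then show ?thesis using rs s_def by simp
  qed
qed


lemma unit_cis: "norm (z::complex) = 1 \<Longrightarrow> cis (Arg z) = z"
proof -
  assume n: "norm z = 1"
  then have "z \<noteq> 0" by auto
  then have "cis (Arg z) = sgn z" by (rule cis_Arg)
  also have "\<dots> = z" using n by (simp add: sgn_div_norm)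
  finally show ?thesis .
qed

lemma unit_div: "norm (v::complex) = 1 \<Longrightarrow> w / v = cnj v * w"
proof -
  assume "norm v = 1"
  then have "v * cnj v = 1" using complex_norm_square[of v] by simp
  then have "inverse v = cnj v" by (rule inverse_unique)
  then show ?thesis by (simp add: divide_inverse mult.commute)
qed

lemma ccw_eq: "ccw_angle u v = (if Arg (v/u) < 0 then Arg (v/u) + 2*pi else Arg (v/u))"
  by (simp only: ccw_angle_def Let_def)

lemma ccw_neg: "Arg (v/u) < 0 \<Longrightarrow> ccw_angle u v = Arg (v/u) + 2*pi"
  by (subst ccw_eq) (simp only: if_P if_True)

lemma ccw_nonneg: "\<not> Arg (v/u) < 0 \<Longrightarrow> ccw_angle u v = Arg (v/u)"
  by (subst ccw_eq) (simp only: if_not_P if_False)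

lemma ccw_bounds: "0 \<le> ccw_angle u v" "ccw_angle u v < 2*pi"
  unfolding ccw_angle_def Let_def using Arg_bounded[of "v/u"] by auto

lemma ccw_pos: assumes "norm u = 1" "norm v = 1" "u \<noteq> v" shows "0 < ccw_angle u v"
proof -
  have nz: "norm (v/u) = 1" using assms by (simp add: norm_divide)
  have "Arg (v/u) \<noteq> 0"
  proof
    assume "Arg (v/u) = 0"
    have "v/u = cis (Arg (v/u))" by (rule unit_cis[OF nz, symmetric])
    also have "\<dots> = 1" using \<open>Arg (v/u) = 0\<close> by (simp add: complex_eq_iff)
    finally have "v/u = 1" .
    then show False using assms by (auto simp: divide_eq_1_iff)
  qed
  then show ?thesis unfolding ccw_angle_def Let_def using Arg_bounded[of "v/u"] by auto
qed

lemma pair_facts: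
  assumes dir: "direction_set D" and al: "alpha_dirs D \<le> pi/2" and dp: "D_pair D v1 v2"
  shows "norm v1 = 1" "norm v2 = 1" "0 < ccw_angle v1 v2" "ccw_angle v1 v2 \<le> pi/2"
    "ccw_angle v1 v2 = Arg (cnj v1 * v2)" "v1 \<bullet> v2 \<ge> 0" "Im (cnj v1 * v2) > 0"
    "Im (cnj v1 * v2) = sin (ccw_angle v1 v2)" "v2 = v1 * cis (ccw_angle v1 v2)"
proof -
  have in1: "v1 \<in> D" "v2 \<in> D" "v1 \<noteq> v2" using dp unfolding D_pair_def by auto
  show n1: "norm v1 = 1" and n2: "norm v2 = 1" using dir in1 unfolding direction_set_def by auto
  show pos: "0 < ccw_angle v1 v2" using ccw_pos n1 n2 in1 by auto
  have "ccw_angle v1 v2 \<le> Sup {ccw_angle v1 v2 | v1 v2. D_pair D v1 v2}"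
  proof (rule cSup_upper)
    show "ccw_angle v1 v2 \<in> {ccw_angle v1 v2 | v1 v2. D_pair D v1 v2}" using dp by blast
    show "bdd_above {ccw_angle v1 v2 | v1 v2. D_pair D v1 v2}"
      by (rule bdd_aboveI[of _ "2*pi"]) (auto intro: less_imp_le ccw_bounds)
  qed
  moreover have "\<exists>v1 v2. D_pair D v1 v2" using dp by blast
  ultimately show le: "ccw_angle v1 v2 \<le> pi/2" using al unfolding alpha_dirs_def by simp
  have dv: "v2 / v1 = cnj v1 * v2" using unit_div[OF n1] .
  have "\<not> Arg (v2/v1) < 0"
  proof
    assume "Arg (v2/v1) < 0"
    then have "ccw_angle v1 v2 = Arg (v2/v1) + 2*pi" by (rule ccw_neg)
    then show False using le Arg_bounded[of "v2/v1"] by linarith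
  qed
  then have ce: "ccw_angle v1 v2 = Arg (v2/v1)" by (rule ccw_nonneg)
  then show ce2: "ccw_angle v1 v2 = Arg (cnj v1 * v2)" by (simp only: dv)
  have nz: "norm (cnj v1 * v2) = 1" using n1 n2 by (simp add: norm_mult)
  have ci: "cis (ccw_angle v1 v2) = cnj v1 * v2" unfolding ce2 by (rule unit_cis[OF nz])
  have "Re (cnj v1 * v2) = cos (ccw_angle v1 v2)" unfolding ci[symmetric] by simp
  moreover have "cos (ccw_angle v1 v2) \<ge> 0"
    by (rule cos_ge_zero) (use pos le pi_gt_zero in linarith)+
  ultimately show "v1 \<bullet> v2 \<ge> 0" by (simp add: inner_cnj)
  show si: "Im (cnj v1 * v2) = sin (ccw_angle v1 v2)" unfolding ci[symmetric] by simp
  have "sin (ccw_angle v1 v2) > 0"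
    by (rule sin_gt_zero) (use pos le pi_gt_zero in linarith)+
  then show "Im (cnj v1 * v2) > 0" using si by simp
  have "v1 * cis (ccw_angle v1 v2) = v1 * (v2 / v1)" by (simp only: ci dv)
  also have "\<dots> = v2" using n1 by auto
  finally show "v2 = v1 * cis (ccw_angle v1 v2)" by (rule sym)
qed

lemma succ_unique:
  assumes dir: "direction_set D" and al: "alpha_dirs D \<le> pi/2"
    and d1: "D_pair D v1 v2" and d2: "D_pair D v1 w2"
  shows "v2 = w2"
proof -
  have a: "\<not> ccw_angle v1 w2 < ccw_angle v1 v2"
    using d1 pair_facts(3)[OF dir al d2] d2 unfolding D_pair_def by blast
  have b: "\<not> ccw_angle v1 v2 < ccw_angle v1 w2"
    using d2 pair_facts(3)[OF dir al d1] d1 unfolding D_pair_def by blast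
  have "ccw_angle v1 v2 = ccw_angle v1 w2" using a b by linarith
  then have "v1 * cis (ccw_angle v1 v2) = v1 * cis (ccw_angle v1 w2)" by simp
  then show ?thesis using pair_facts(9)[OF dir al d1, symmetric] pair_facts(9)[OF dir al d2, symmetric] by simp
qed

lemma dang_angle:
  assumes dir: "direction_set D" and al: "alpha_dirs D \<le> pi/2"
    and d1: "D_pair D v1 v2" and r: "9/10 < Im (cnj v1 * v2)"
  shows "pi/3 < ccw_angle v1 v2"
proof (rule ccontr)
  assume "\<not> pi/3 < ccw_angle v1 v2"
  then have "sin (ccw_angle v1 v2) \<le> sin (pi/3)"
    using pair_facts(3,4)[OF dir al d1] by (subst sin_mono_le_eq) (use pi_gt_zero in linarith)+
  moreover have "sqrt 3 < (9/5::real)"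
    by (rule real_less_lsqrt) (auto simp: power2_eq_square)
  ultimately show False using r pair_facts(8)[OF dir al d1] sin_60 by simp
qed

lemma far_apart:
  assumes dir: "direction_set D" and al: "alpha_dirs D \<le> pi/2"
    and d1: "D_pair D v1 v2" and r1: "9/10 < Im (cnj v1 * v2)"
    and d2: "D_pair D w1 w2" and r2: "9/10 < Im (cnj w1 * w2)"
    and ne: "v1 \<noteq> w1"
  shows "1 < (norm (w1 - v1))\<^sup>2"
proof -
  have n1: "norm v1 = 1" and m1: "norm w1 = 1" using pair_facts(1)[OF dir al d1] pair_facts(1)[OF dir al d2] by auto
  have w1D: "w1 \<in> D" "v1 \<in> D" using d1 d2 unfolding D_pair_def by auto
  define z where "z = w1 / v1"
  have nz: "norm z = 1" using n1 m1 by (simp add: z_def norm_divide)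
  define a where "a = Arg z"
  have zc: "z = cis a" using unit_cis[OF nz] a_def by simp
  have ab: "-pi < a" "a \<le> pi" using Arg_bounded[of z] a_def by auto
  have "a \<noteq> 0"
  proof
    assume "a = 0"
    then have "z = 1" using zc by (simp add: complex_eq_iff)
    moreover have "v1 \<noteq> 0" using n1 by auto
    ultimately show False using ne by (simp add: z_def divide_eq_eq)
  qed
  have big: "pi/3 < \<bar>a\<bar>"
  proof (cases "a > 0")
    case True
    have "ccw_angle v1 w1 = a" using True a_def z_def ccw_nonneg[of w1 v1] by simp
    moreover have "0 < ccw_angle v1 w1" using ccw_pos n1 m1 ne by auto
    moreover have "\<not> (0 < ccw_angle v1 w1 \<and> ccw_angle v1 w1 < ccw_angle v1 v2)"
      using d1 w1D(1) unfolding D_pair_def by blast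
    ultimately have "ccw_angle v1 v2 \<le> a" by linarith
    then show ?thesis using dang_angle[OF dir al d1 r1] True by simp
  next
    case False
    then have an: "a < 0" using \<open>a \<noteq> 0\<close> by simp
    have "z \<notin> \<real>"
    proof
      assume "z \<in> \<real>"
      then have "Arg z = 0 \<or> Arg z = pi" using Arg_eq_0_pi by blast
      then show False using an a_def by auto
    qed
    have i1: "v1 * cnj v1 = 1" "w1 * cnj w1 = 1" using complex_norm_square[of v1] complex_norm_square[of w1] n1 m1 by simp_all
    have "v1 \<noteq> 0" "w1 \<noteq> 0" using n1 m1 by auto
    then have "cnj v1 = 1 / v1" "cnj w1 = 1 / w1" using i1 by (simp_all add: eq_divide_eq mult.commute)
    then have "v1 / w1 = cnj z" by (simp add: z_def)
    then have "Arg (v1 / w1) = - a" using Arg_cnj[of z] \<open>z \<notin> \<real>\<close> a_def by simp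
    then have "ccw_angle w1 v1 = -a" using an ccw_nonneg[of v1 w1] by simp
    moreover have "0 < ccw_angle w1 v1" using ccw_pos n1 m1 ne by auto
    moreover have "\<not> (0 < ccw_angle w1 v1 \<and> ccw_angle w1 v1 < ccw_angle w1 w2)"
      using d2 w1D(2) unfolding D_pair_def by blast
    ultimately have "ccw_angle w1 w2 \<le> -a" by linarith
    then show ?thesis using dang_angle[OF dir al d2 r2] an by simp
  qed
  have "cos a = cos \<bar>a\<bar>" by simp
  also have "\<dots> < cos (pi/3)" using big ab by (subst cos_mono_less_eq) auto
  finally have ca: "cos a < 1/2" using cos_60 by simp
  have "w1 - v1 = v1 * (z - 1)" using n1 by (auto simp: z_def algebra_simps)
  then have "norm (w1 - v1) = norm (z - 1)" using n1 by (simp add: norm_mult)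
  moreover have "(norm (z - 1))\<^sup>2 = 2 - 2 * cos a"
  proof -
    have e: "(sin a)^2 + (cos a)^2 = 1" by simp
    have "(norm (z - 1))\<^sup>2 = (cos a - 1)^2 + (sin a)^2" using zc by (simp add: cmod_power2)
    then show ?thesis using e by (simp add: power2_diff algebra_simps)
  qed
  ultimately show ?thesis using ca by simp
qed



lemma hp_gen:
  fixes g :: "complex \<Rightarrow> real"
  assumes add: "\<And>y w. g (y + w) = g y + g w" and sc: "\<And>l y. g (l *\<^sub>R y) = l * g y"
    and z: "norm z \<le> r" "g z = r" and r0: "r > 0"
    and disj: "(\<lambda>y. a + y) ` {y. 0 < g y} \<inter> (cball 0 r \<union> {p}) = {}"
    and xI: "x \<in> (\<lambda>y. a + y) ` {y. 0 < g y}" and seg: "x \<in> closed_segment 0 p"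
  shows False
proof -
  have mem: "w \<in> (\<lambda>y. a + y) ` {y. 0 < g y}" if "g a < g w" for w
  proof -
    have "g w = g a + g (w - a)" using add[of a "w - a"] by simp
    then have "0 < g (w - a)" using that by simp
    then show ?thesis by (intro image_eqI[of w _ "w - a"]) auto
  qed
  have ga: "\<not> g a < g z" using mem[of z] disj z by (auto simp: mem_cball_0)
  have gp: "\<not> g a < g p" using mem[of p] disj by auto
  obtain y where y: "x = a + y" "0 < g y" using xI by auto
  have gx: "g x = g a + g y" using add y by simp
  obtain l where l: "0 \<le> l" "l \<le> 1" "x = l *\<^sub>R p" using seg unfolding closed_segment_def by auto
  have gl: "g x = l * g p" using l sc by simp
  show False
  proof (cases "g p \<le> 0")
    case True
    then have "g x \<le> 0" using gl l by (simp add: mult_nonneg_nonpos)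
    then show False using gx y ga z r0 by linarith
  next
    case False
    then have "l * g p \<le> g p" using l by (simp add: mult_le_cancel_right1)
    then show False using gl gx y gp by linarith
  qed
qed

lemma hp:
  assumes n: "norm v = 1" and Q: "Q \<in> open_halfplanes v"
    and disj: "(\<lambda>y. a + y) ` Q \<inter> (cball 0 r \<union> {p}) = {}"
    and xI: "x \<in> (\<lambda>y. a + y) ` Q" and seg: "x \<in> closed_segment 0 p" and r0: "r > 0"
  shows False
proof -
  have vv: "(Re v)\<^sup>2 + (Im v)\<^sup>2 = 1" using n by (metis cmod_power2 power_one)
  have add: "\<And>y w. Im (cnj v * (y + w)) = Im (cnj v * y) + Im (cnj v * w)" by (simp add: algebra_simps)
  have sc: "\<And>l y. Im (cnj v * (l *\<^sub>R y)) = l * Im (cnj v * y)" by (simp add: algebra_simps)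
  have nz: "norm (r *\<^sub>R (\<i> * v)) \<le> r" "norm (r *\<^sub>R (-(\<i> * v))) \<le> r" using n r0 by (simp_all add: norm_mult)
  have "Im (cnj v * (r *\<^sub>R (\<i> * v))) = r * ((Re v)\<^sup>2 + (Im v)\<^sup>2)"
    by (simp add: algebra_simps power2_eq_square)
  then have gz: "Im (cnj v * (r *\<^sub>R (\<i> * v))) = r" using vv by simp
  from Q consider "Q = {y. 0 < Im (cnj v * y)}" | "Q = {y. Im (cnj v * y) < 0}"
    unfolding open_halfplanes_def by auto
  then show False
  proof cases
    case 1
    show False
      by (rule hp_gen[of "\<lambda>y. Im (cnj v * y)", OF add sc nz(1) gz r0, of a p x])
        (use disj xI seg 1 in auto)
  next
    case 2
    have e: "Q = {y. 0 < - Im (cnj v * y)}" using 2 by auto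
    show False
      by (rule hp_gen[of "\<lambda>y. - Im (cnj v * y)" "r *\<^sub>R (-(\<i> * v))" r a p x])
        (use disj xI seg e add sc nz gz r0 in \<open>auto simp: algebra_simps\<close>)
  qed
qed

lemma floor_close: "\<lfloor>a::real\<rfloor> = \<lfloor>b\<rfloor> \<Longrightarrow> \<bar>a - b\<bar> < 1"
proof -
  assume e: "\<lfloor>a::real\<rfloor> = \<lfloor>b\<rfloor>"
  have "real_of_int \<lfloor>a\<rfloor> \<le> a" "a < real_of_int \<lfloor>a\<rfloor> + 1" by linarith+
  moreover have "real_of_int \<lfloor>a\<rfloor> \<le> b" "b < real_of_int \<lfloor>a\<rfloor> + 1" unfolding e by linarith+
  ultimately show ?thesis unfolding abs_less_iff by linarith
qed

lemma sq_small: "\<bar>x::real\<bar> < 1/2 \<Longrightarrow> x\<^sup>2 < (1/2)^2"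
proof -
  assume a: "\<bar>x\<bar> < 1/2"
  have "\<bar>x\<bar>^2 < (1/2)^2" by (rule power_strict_mono) (use a in auto)
  then show ?thesis by simp
qed

lemma count_pairs:
  assumes dir: "direction_set D" and al: "alpha_dirs D \<le> pi/2" and r: "9/10 < r"
  defines "P \<equiv> {(v1,v2). D_pair D v1 v2 \<and> r < Im (cnj v1 * v2)}"
  shows "finite P" "card P \<le> 25"
proof -
  define f where "f = (\<lambda>(v1::complex, v2::complex). (\<lfloor>2 * Re v1\<rfloor>, \<lfloor>2 * Im v1\<rfloor>))"
  have inj: "inj_on f P"
  proof (rule inj_onI)
    fix q q' assume q: "q \<in> P" and q': "q' \<in> P" and fe: "f q = f q'"
    obtain v1 v2 where qq: "q = (v1,v2)" by (cases q)
    obtain w1 w2 where qq': "q' = (w1,w2)" by (cases q')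
    have d1: "D_pair D v1 v2" "r < Im (cnj v1 * v2)" using q qq P_def by auto
    have d2: "D_pair D w1 w2" "r < Im (cnj w1 * w2)" using q' qq' P_def by auto
    show "q = q'"
    proof (cases "v1 = w1")
      case True
      then show ?thesis using succ_unique[OF dir al d1(1)] d2 qq qq' by auto
    next
      case False
      have big: "1 < (norm (w1 - v1))\<^sup>2"
        using far_apart[OF dir al d1(1) _ d2(1) _ False] d1(2) d2(2) r by linarith
      have "\<lfloor>2 * Re v1\<rfloor> = \<lfloor>2 * Re w1\<rfloor>" "\<lfloor>2 * Im v1\<rfloor> = \<lfloor>2 * Im w1\<rfloor>"
        using fe qq qq' f_def by auto
      then have "\<bar>2 * Re v1 - 2 * Re w1\<bar> < 1" "\<bar>2 * Im v1 - 2 * Im w1\<bar> < 1"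
        using floor_close by blast+
      moreover have "Re (w1 - v1) = Re w1 - Re v1" "Im (w1 - v1) = Im w1 - Im v1" by simp_all
      ultimately have "\<bar>Re (w1 - v1)\<bar> < 1/2" "\<bar>Im (w1 - v1)\<bar> < 1/2" unfolding abs_less_iff by linarith+
      then have "(Re (w1 - v1))\<^sup>2 < (1/2)^2" "(Im (w1 - v1))\<^sup>2 < (1/2)^2"
        using sq_small by blast+
      moreover have "(norm (w1 - v1))\<^sup>2 = (Re (w1 - v1))\<^sup>2 + (Im (w1 - v1))\<^sup>2" by (rule cmod_power2)
      ultimately have "(norm (w1 - v1))\<^sup>2 < 1" by (simp only: power2_eq_square)
      then show ?thesis using big by simp
    qed
  qed
  have sub: "f ` P \<subseteq> {-2..2} \<times> {-2..2}"
  proof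
    fix y assume "y \<in> f ` P"
    then obtain v1 v2 where "D_pair D v1 v2" "y = f (v1, v2)" using P_def by auto
    then have "norm v1 = 1" "y = (\<lfloor>2 * Re v1\<rfloor>, \<lfloor>2 * Im v1\<rfloor>)"
      using pair_facts(1)[OF dir al] f_def by auto
    moreover have "\<bar>Re v1\<bar> \<le> 1" "\<bar>Im v1\<bar> \<le> 1"
      using abs_Re_le_cmod[of v1] abs_Im_le_cmod[of v1] calculation(1) by simp_all
    ultimately show "y \<in> {-2..2} \<times> {-2..2}" by (auto simp: le_floor_iff floor_le_iff abs_le_iff)
  qed
  have "finite (f ` P)" by (rule finite_subset[OF sub]) simp
  then show "finite P" using finite_imageD[OF _ inj] by blast
  have "card P \<le> card ({-2..2::int} \<times> {-2..2::int})"
    by (rule card_inj_on_le[OF inj sub]) simp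
  then show "card P \<le> 25" by simp
qed



lemma cover_point:
  assumes dir: "direction_set D" and al: "alpha_dirs D \<le> pi/2" and r0: "0 < r"
    and pu: "p \<in> unsafe_set D r"
  shows "\<exists>v1 v2. D_pair D v1 v2 \<and> r < Im (cnj v1 * v2) \<and>
           (p \<in> cap (-v1) r \<or> p \<in> cap v2 r \<or> p \<in> cap v1 r \<or> p \<in> cap (-v2) r)"
proof -
  have p1: "norm p \<le> 1" using pu unfolding unsafe_set_def by (simp add: mem_cball_0)
  obtain x where xs: "x \<in> closed_segment 0 p" and xn: "x \<notin> CH_dirs D (cball 0 r \<union> {p})"
    using pu unfolding unsafe_set_def safe_pt_def by auto
  then obtain I where I: "I \<in> T_dirs D" "I \<inter> (cball 0 r \<union> {p}) = {}" "x \<in> I"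
    unfolding CH_dirs_def by auto
  then obtain a Q where aQ: "I = (\<lambda>y. a + y) ` Q" "Q \<in> Q_dirs D"
    unfolding T_dirs_def by auto
  have capI: "p \<in> cap w r" if "r < p \<bullet> w" for w
    using that p1 unfolding cap_def by simp
  from aQ(2) consider (h) v where "v \<in> D" "Q \<in> open_halfplanes v"
    | (c) v1 v2 where "D_pair D v1 v2" "Q = pspan (- v1) v2 \<or> Q = pspan v1 (- v2)"
    unfolding Q_dirs_def by auto
  then show ?thesis
  proof cases
    case h
    have "norm v = 1" using dir h unfolding direction_set_def by auto
    then have False using hp[OF _ h(2), where a=a and r=r and p=p and x=x] I aQ xs r0 by auto
    then show ?thesis ..
  next
    case c
    note pf = pair_facts[OF dir al c(1)]
    from c(2) show ?thesis
    proof
      assume Qe: "Q = pspan (- v1) v2"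
      have "r < Im (cnj v1 * v2) \<and> (r < p \<bullet> (-v1) \<or> r < p \<bullet> v2)"
        by (rule cone_lemma[OF pf(1) pf(2) pf(6) pf(7), where x=x and a=a and p=p and r=r])
          (use I aQ Qe xs p1 r0 in auto)
      then show ?thesis using c(1) capI by blast
    next
      assume Qe: "Q = pspan v1 (- v2)"
      have e: "pspan (- (- v1)) (- v2) = pspan v1 (- v2)" by simp
      have "r < Im (cnj (-v1) * (-v2)) \<and> (r < p \<bullet> (-(-v1)) \<or> r < p \<bullet> (-v2))"
        by (rule cone_lemma[of "-v1" "-v2", where x=x and a=a and p=p and r=r])
          (use I aQ Qe xs p1 r0 pf e in auto)
      then have R1: "r < Im (cnj v1 * v2)" and R2: "r < p \<bullet> v1 \<or> r < p \<bullet> (-v2)"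
        by (simp_all only: minus_minus complex_cnj_minus mult_minus_left mult_minus_right)
      then show ?thesis using c(1) capI[of v1] capI[of "-v2"] by blast
    qed
  qed
qed

lemma base_bound:
  fixes c L r :: real
  assumes c: "c > 0" and L: "L > 0" and re: "r = 1 - c * sqrt L" and r1: "r > 0"
  shows "cap_base r \<le> (2 * sqrt (2 * c)) * L powr (1/4)"
proof -
  have "1 - r\<^sup>2 = (1 - r) * (1 + r)" by (simp add: power2_eq_square algebra_simps)
  also have "\<dots> \<le> (1 - r) * 2"
    using re c L r1 by (intro mult_left_mono) auto
  finally have "1 - r\<^sup>2 \<le> 2 * c * sqrt L" using re by simp
  then have "sqrt (1 - r\<^sup>2) \<le> sqrt (2 * c * sqrt L)" by (rule real_sqrt_le_mono)
  also have "\<dots> = sqrt (2 * c) * sqrt (sqrt L)" by (simp add: real_sqrt_mult)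
  also have "sqrt (sqrt L) = L powr (1/4)"
  proof -
    have "sqrt (sqrt L) = (L powr (1/2)) powr (1/2)" using L by (simp add: powr_half_sqrt)
    also have "\<dots> = L powr (1/4)" by (simp add: powr_powr)
    finally show ?thesis .
  qed
  finally show ?thesis unfolding cap_base_def by simp
qed

theorem lemma3p12:
  fixes c :: real
  assumes "c > 0"
  shows "\<exists>(K::nat) C1 C2 (N0::nat). \<forall>n\<ge>N0. \<forall>D r.
     direction_set D \<longrightarrow> 0 \<le> alpha_dirs D \<longrightarrow> alpha_dirs D \<le> pi / 2 \<longrightarrow>
     r = 1 - c * sqrt (ln (real n) / real n) \<longrightarrow>
     (\<exists>F. finite F \<and> card F \<le> K \<and>
        (\<forall>X\<in>F. \<exists>u t. norm u = 1 \<and> -1 < t \<and> t < 1 \<and> X = cap u t \<and>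
            cap_base t \<le> C1 * (ln (real n) / real n) powr (1/4) \<and>
            cap_height t \<le> C2 * sqrt (ln (real n) / real n)) \<and>
        unsafe_set D r \<subseteq> \<Union>F)"
proof -
  have "eventually (\<lambda>n. ln (real n) / real n < (1 / (10 * c))\<^sup>2) sequentially"
    using lim_ln_over_n assms by (intro order_tendstoD(2)) auto
  then obtain N where N: "\<And>n. n \<ge> N \<Longrightarrow> ln (real n) / real n < (1 / (10 * c))\<^sup>2"
    unfolding eventually_sequentially by blast
  show ?thesis
  proof (rule exI[of _ "100::nat"], rule exI[of _ "2 * sqrt (2 * c)"], rule exI[of _ c],
      rule exI[of _ "max N 2"], intro allI impI)
    fix n :: nat and D :: "complex set" and r :: real
    assume n: "max N 2 \<le> n" and dir: "direction_set D" and a0: "0 \<le> alpha_dirs D" and al: "alpha_dirs D \<le> pi / 2"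
      and re: "r = 1 - c * sqrt (ln (real n) / real n)"
    define L where "L = ln (real n) / real n"
    have Lp: "L > 0" using n by (auto simp: L_def intro!: divide_pos_pos)
    have "L < (1 / (10 * c))\<^sup>2" using N n L_def by auto
    then have "sqrt L < 1 / (10 * c)" using assms by (metis abs_of_pos real_sqrt_abs real_sqrt_less_mono zero_less_divide_1_iff mult_pos_pos zero_less_numeral)
    then have "c * sqrt L < 1/10" using assms by (simp add: field_simps)
    then have r9: "9/10 < r" using re L_def by simp
    have sLp: "0 < sqrt L" using Lp by simp
    then have r1: "r < 1" using re L_def assms by simp
    define P where "P = {(v1,v2). D_pair D v1 v2 \<and> r < Im (cnj v1 * v2)}"
    have fP: "finite P" and cP: "card P \<le> 25" using count_pairs[OF dir al r9] P_def by auto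
    define sel where "sel = (\<lambda>(q::complex \<times> complex, j::nat). if j = 0 then - fst q else if j = 1 then snd q
       else if j = 2 then fst q else - snd q)"
    define F where "F = (\<lambda>qj. cap (sel qj) r) ` (P \<times> {0..<4})"
    have "finite F" using fP unfolding F_def by simp
    moreover have "card F \<le> 100"
    proof -
      have "card F \<le> card (P \<times> {0..<4::nat})" unfolding F_def by (rule card_image_le) (use fP in simp)
      also have "\<dots> = card P * 4" by (simp add: card_cartesian_product)
      finally show ?thesis using cP by simp
    qed
    moreover have "\<forall>X\<in>F. \<exists>u t. norm u = 1 \<and> -1 < t \<and> t < 1 \<and> X = cap u t \<and>
            cap_base t \<le> (2 * sqrt (2 * c)) * L powr (1/4) \<and>
            cap_height t \<le> c * sqrt L"
    proof
      fix X assume "X \<in> F"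
      then obtain v1 v2 j where q: "(v1, v2) \<in> P" "j < 4" "X = cap (sel ((v1,v2), j)) r"
        unfolding F_def by auto
      have "D_pair D v1 v2" using q P_def by auto
      then have "norm v1 = 1" "norm v2 = 1" using pair_facts[OF dir al] by auto
      then have "norm (sel ((v1,v2), j)) = 1" unfolding sel_def by auto
      moreover have "cap_base r \<le> (2 * sqrt (2 * c)) * L powr (1/4)"
        using base_bound[OF assms Lp _ ] re L_def r9 by simp
      moreover have "cap_height r \<le> c * sqrt L" using re L_def by (simp add: cap_height_def)
      ultimately show "\<exists>u t. norm u = 1 \<and> -1 < t \<and> t < 1 \<and> X = cap u t \<and>
            cap_base t \<le> (2 * sqrt (2 * c)) * L powr (1/4) \<and> cap_height t \<le> c * sqrt L"
        using q r9 r1 by (intro exI[of _ "sel ((v1,v2), j)"] exI[of _ r]) auto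
    qed
    moreover have "unsafe_set D r \<subseteq> \<Union>F"
    proof
      fix p assume pu: "p \<in> unsafe_set D r"
      obtain v1 v2 where d: "D_pair D v1 v2" "r < Im (cnj v1 * v2)"
        and cp: "p \<in> cap (-v1) r \<or> p \<in> cap v2 r \<or> p \<in> cap v1 r \<or> p \<in> cap (-v2) r"
        using cover_point[OF dir al _ pu] r9 by auto
      have inP: "(v1,v2) \<in> P" using d P_def by auto
      have inF: "cap (sel ((v1,v2), j)) r \<in> F" if "j < 4" for j
        unfolding F_def using inP that by auto
      have s: "sel ((v1,v2),0) = -v1" "sel ((v1,v2),1) = v2" "sel ((v1,v2),2) = v1" "sel ((v1,v2),3) = -v2"
        by (simp_all add: sel_def)
      have "cap (-v1) r \<in> F" "cap v2 r \<in> F" "cap v1 r \<in> F" "cap (-v2) r \<in> F"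
        using inF[of 0] inF[of 1] inF[of 2] inF[of 3] unfolding s by simp_all
      then show "p \<in> \<Union>F" using cp by blast
    qed
    ultimately show "\<exists>F. finite F \<and> card F \<le> 100 \<and>
        (\<forall>X\<in>F. \<exists>u t. norm u = 1 \<and> -1 < t \<and> t < 1 \<and> X = cap u t \<and>
            cap_base t \<le> (2 * sqrt (2 * c)) * (ln (real n) / real n) powr (1/4) \<and>
            cap_height t \<le> c * sqrt (ln (real n) / real n)) \<and>
        unsafe_set D r \<subseteq> \<Union>F" unfolding L_def by blast
  qed
qed


end
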